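(* Let $n\in\mathbb N$, let $0\le x_0<x_1<\dots<x_n\le1$, let $\nu_1,\dots,\nu_n>0$, let $a_1,\dots,a_n\in(0,1]$, and let $\alpha_0,\dots,\alpha_n>0$. (a) If $x_n-x_0<1$, then there exist a unique $C>0$ and a unique system of points $y_1,\dots,y_n$ with $x_j<y_{j+1}<x_{j+1}$ for $j=0,\dots,n-1$ such that $$S(t):=C\prod_{k=1}^n|\sin(a_k\pi(t-y_k))|^{\nu_k}$$ satisfies $S(x_j)=\alpha_j$ for $j=0,\dots,n$. (b) If moreover $\nu_1,\dots,\nu_n\in\mathbb N$, then for these $y_k$ and $C$ the function $T(t):=C\prod_{k=1}^n\sin^{\nu_k}(a_k\pi(t-y_k))$ satisfies $$T(x_j)=(-1)^{\sum_{k=j+1}^n\nu_k}\alpha_j\quad(j=0,1,\dots,n).$$ (c) If $a_1,\dots,a_n<1$, then the assertions of (a) and (b) remain true without the assumption $x_n-x_0<1$. *)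

theory Defs
  imports Complex_Main
begin

definition S_fun :: "nat \<Rightarrow> real \<Rightarrow> (nat \<Rightarrow> real) \<Rightarrow> (nat \<Rightarrow> real) \<Rightarrow> (nat \<Rightarrow> real) \<Rightarrow> real \<Rightarrow> real" where
  "S_fun n C a nu y t = C * (\<Prod>k = 1..n. \<bar>sin (a k * pi * (t - y k))\<bar> powr nu k)"

definition T_fun :: "nat \<Rightarrow> real \<Rightarrow> (nat \<Rightarrow> real) \<Rightarrow> (nat \<Rightarrow> real) \<Rightarrow> (nat \<Rightarrow> real) \<Rightarrow> real \<Rightarrow> real" where
  "T_fun n C a nu y t = C * (\<Prod>k = 1..n. sin (a k * pi * (t - y k)) ^ nat \<lfloor>nu k\<rfloor>)"

definition is_solution :: "nat \<Rightarrow> (nat \<Rightarrow> real) \<Rightarrow> (nat \<Rightarrow> real) \<Rightarrow> (nat \<Rightarrow> real) \<Rightarrow> (nat \<Rightarrow> real)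
    \<Rightarrow> real \<Rightarrow> (nat \<Rightarrow> real) \<Rightarrow> bool" where
  "is_solution n x a nu alpha C y \<longleftrightarrow>
     C > 0 \<and> (\<forall>j<n. x j < y (j+1) \<and> y (j+1) < x (j+1)) \<and>
     (\<forall>j\<le>n. S_fun n C a nu y (x j) = alpha j)"

end

theory Submission
  imports Defs
begin


lemma cot_strict:
  fixes p q :: real
  assumes "0 < p" "p < q" "q < pi"
  shows "cos q / sin q < cos p / sin p"
proof -
  have sp: "sin p > 0" using assms by (intro sin_gt_zero) auto
  have sq: "sin q > 0" using assms by (intro sin_gt_zero) auto
  have "sin (q - p) > 0" using assms by (intro sin_gt_zero) auto
  hence "cos p * sin q - cos q * sin p > 0" by (simp add: sin_diff algebra_simps)
  hence "cos q * sin p < cos p * sin q" by simp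
  thus ?thesis using sp sq by (simp add: divide_simps)
qed

lemma R_strict:
  fixes p q h :: real
  assumes "0 < p" "p < q" "q < pi" "0 < h" "h < pi"
  shows "sin (q + h) / sin q < sin (p + h) / sin p"
proof -
  have sp: "sin p > 0" using assms by (intro sin_gt_zero) auto
  have sq: "sin q > 0" using assms by (intro sin_gt_zero) auto
  have sh: "sin h > 0" using assms by (intro sin_gt_zero) auto
  have e: "\<And>r. sin r \<noteq> 0 \<Longrightarrow> sin (r + h) / sin r = cos h + sin h * (cos r / sin r)"
    by (simp add: sin_add field_simps)
  have "sin h * (cos q / sin q) < sin h * (cos p / sin p)"
    using cot_strict[OF assms(1-3)] sh by (rule mult_strict_left_mono)
  thus ?thesis using e[of p] e[of q] sp sq by simp
qed

lemma Q_strict: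
  fixes f f' t :: real
  assumes "0 < f" "f < f'" "f' < t" "t < pi"
  shows "sin (t - f') / sin f' < sin (t - f) / sin f"
proof -
  have sp: "sin f > 0" using assms by (intro sin_gt_zero) auto
  have sq: "sin f' > 0" using assms by (intro sin_gt_zero) auto
  have sh: "sin t > 0" using assms by (intro sin_gt_zero) auto
  have e: "\<And>r. sin r \<noteq> 0 \<Longrightarrow> sin (t - r) / sin r = sin t * (cos r / sin r) - cos t"
    by (simp add: sin_diff field_simps)
  have "sin t * (cos f' / sin f') < sin t * (cos f / sin f)"
    using cot_strict[of f f'] assms sh by (intro mult_strict_left_mono) auto
  thus ?thesis using e[of f] e[of f'] sp sq by simp
qed

lemma blowup:
  fixes t E b :: real
  assumes "0 < t" "t < pi" "0 < E" "0 < b"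
  shows "\<exists>f. 0 < f \<and> f < b \<and> f < t \<and> E \<le> sin (t - f) / sin f"
proof -
  define f where "f = min (min b t / 2) (min (pi/3) (sin t / (2*(E+1))))"
  have st: "sin t > 0" using assms by (intro sin_gt_zero) auto
  have f0: "f > 0" unfolding f_def using assms st by auto
  have fb: "f < b" "f < t" unfolding f_def using assms by auto
  have fp: "f \<le> pi/3" unfolding f_def by (rule min.coboundedI2, rule min.cobounded1)
  have fs: "f \<le> sin t / (2*(E+1))" unfolding f_def by auto
  have sf: "sin f > 0" using f0 fp by (intro sin_gt_zero) auto
  have sfl: "sin f \<le> f" using sin_x_le_x f0 by auto
  have cf: "cos f \<ge> 1/2"
  proof -
    have "cos (pi/3) \<le> cos f" using f0 fp by (intro cos_monotone_0_pi_le) auto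
    thus ?thesis by (simp add: cos_60)
  qed
  have e: "sin (t - f) / sin f = sin t * (cos f / sin f) - cos t"
    using sf by (simp add: sin_diff field_simps)
  have "cos f / sin f \<ge> (1/2) / f"
    using cf sf sfl f0 by (intro frac_le) auto
  hence "sin t * (cos f / sin f) \<ge> sin t * ((1/2) / f)" using st by (intro mult_left_mono) auto
  moreover have "sin t * ((1/2) / f) \<ge> E + 1"
    using fs f0 assms st by (simp add: field_simps)
  moreover have "cos t \<le> 1" by simp
  ultimately have "E \<le> sin (t - f) / sin f" unfolding e by linarith
  thus ?thesis using f0 fb by blast
qed

lemma tele: "(\<Sum>j=1..(m::nat). (f j - f (j-1)) :: real) = f m - f 0"
proof (induction m)
  case 0 then show ?case by simp
next
  case (Suc m) then show ?case by (simp add: sum.atLeast_Suc_atMost_Suc_shift)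
qed



locale setup9 =
  fixes n :: nat and x nu a :: "nat \<Rightarrow> real"
  assumes xinc: "\<forall>j<n. x j < x (j+1)"
    and nupos: "\<forall>k\<in>{1..n}. nu k > 0"
    and apos: "\<forall>k\<in>{1..n}. a k > 0"
    and aD: "\<forall>k\<in>{1..n}. a k * (x n - x 0) < 1"
begin

definition g :: "nat \<Rightarrow> real \<Rightarrow> real" where "g k u = ln (sin (a k * pi * u))"
definition K :: "nat \<Rightarrow> real \<Rightarrow> real" where "K k u = nu k * ln \<bar>sin (a k * pi * u)\<bar>"
definition T :: "nat \<Rightarrow> nat \<Rightarrow> real \<Rightarrow> real" where "T j k s = K k (x j - s) - K k (x (j-1) - s)"
definition G :: "(nat \<Rightarrow> real) \<Rightarrow> nat \<Rightarrow> real" where "G y j = (\<Sum>k=1..n. T j k (y k))"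
definition L :: "(nat \<Rightarrow> real) \<Rightarrow> nat \<Rightarrow> real" where "L y j = (\<Sum>k=1..n. K k (x j - y k))"
definition inbox :: "(nat \<Rightarrow> real) \<Rightarrow> bool" where
  "inbox y \<longleftrightarrow> (\<forall>k\<in>{1..n}. x (k-1) < y k \<and> y k < x k)"

lemma xlt: "i < j \<Longrightarrow> j \<le> n \<Longrightarrow> x i < x j"
proof (induction j)
  case 0 then show ?case by simp
next
  case (Suc j)
  have "x j < x (Suc j)" using xinc Suc.prems by auto
  then show ?case using Suc by (cases "i = j") auto
qed

lemma xle: "i \<le> j \<Longrightarrow> j \<le> n \<Longrightarrow> x i \<le> x j"
  using xlt by (cases "i = j") (auto simp: less_imp_le)

lemma sinpos: "k \<in> {1..n} \<Longrightarrow> 0 < u \<Longrightarrow> u \<le> x n - x 0 \<Longrightarrow> 0 < sin (a k * pi * u)"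
proof -
  assume k: "k \<in> {1..n}" and u: "0 < u" "u \<le> x n - x 0"
  have ak: "a k > 0" "a k * (x n - x 0) < 1" using apos aD k by auto
  have "a k * u \<le> a k * (x n - x 0)" using u ak by (intro mult_left_mono) auto
  hence "a k * u < 1" using ak by linarith
  hence "a k * u * pi < 1 * pi" by (intro mult_strict_right_mono) auto
  moreover have "0 < a k * pi * u" using ak u by simp
  ultimately show ?thesis by (intro sin_gt_zero) (auto simp: ac_simps)
qed

lemma K_neg: "K k (- u) = K k u"
  unfolding K_def by simp

lemma K_pos: "k \<in> {1..n} \<Longrightarrow> 0 < u \<Longrightarrow> u \<le> x n - x 0 \<Longrightarrow> K k u = nu k * g k u"
  using sinpos unfolding K_def g_def by (simp add: less_imp_le)

lemma conc:
  assumes k: "k \<in> {1..n}" and "0 < u" "u < u'" "0 < h" "u' + h \<le> x n - x 0"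
  shows "g k (u' + h) - g k u' < g k (u + h) - g k u"
proof -
  have ak: "a k > 0" using apos k by auto
  define p q e where "p = a k * pi * u" "q = a k * pi * u'" "e = a k * pi * h"
  have s1: "sin (a k * pi * (u'+h)) > 0" "sin (a k * pi * (u+h)) > 0" "sin q > 0" "sin p > 0"
    using sinpos[OF k] assms unfolding p_q_e_def by auto
  have lt1: "a k * pi * (u' + h) < pi"
  proof -
    have "a k * (u' + h) \<le> a k * (x n - x 0)" using assms ak by (intro mult_left_mono) auto
    hence "a k * (u'+h) < 1" using aD k by force
    hence "a k * (u' + h) * pi < 1 * pi" by (intro mult_strict_right_mono) auto
    thus ?thesis by (simp add: ac_simps)
  qed
  have akp: "a k * pi > 0" using ak by simp
  have "a k * pi * u' < a k * pi * (u'+h)" "a k * pi * h < a k * pi * (u'+h)"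
    using akp assms by (intro mult_strict_left_mono; simp)+
  moreover have "0 < p" "0 < e" using akp assms unfolding p_q_e_def by auto
  moreover have "p < q" using akp assms unfolding p_q_e_def by (intro mult_strict_left_mono) auto
  ultimately have "0 < p" "p < q" "q < pi" "0 < e" "e < pi"
    using lt1 unfolding p_q_e_def by linarith+
  from R_strict[OF this] have r: "sin (q + e) / sin q < sin (p + e) / sin p" .
  have eq: "a k * pi * (u'+h) = q + e" "a k * pi * (u+h) = p + e"
    unfolding p_q_e_def by (simp_all add: algebra_simps)
  have "ln (sin (q + e) / sin q) < ln (sin (p + e) / sin p)"
    using r s1 eq by (subst ln_less_cancel_iff) auto
  thus ?thesis using s1 eq unfolding g_def p_q_e_def[symmetric] by (simp add: ln_div)
qed

lemma Qlem:
  assumes k: "k \<in> {1..n}" and "0 < v" "v < v'" "v' < d" "d \<le> x n - x 0"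
  shows "g k (d - v') - g k v' < g k (d - v) - g k v"
proof -
  have ak: "a k > 0" using apos k by auto
  define f f' t where "f = a k * pi * v" "f' = a k * pi * v'" "t = a k * pi * d"
  have lt1: "a k * pi * d < pi"
  proof -
    have "a k * d \<le> a k * (x n - x 0)" using assms ak by (intro mult_left_mono) auto
    hence "a k * d < 1" using aD k by force
    hence "a k * d * pi < 1 * pi" by (intro mult_strict_right_mono) auto
    thus ?thesis by (simp add: ac_simps)
  qed
  have akp: "a k * pi > 0" using ak by simp
  have "0 < f" "f < f'" "f' < t" "t < pi"
    using assms akp lt1 unfolding f_f'_t_def by (auto intro: mult_strict_left_mono)
  from Q_strict[OF this] have r: "sin (t - f') / sin f' < sin (t - f) / sin f" .
  have eq: "a k * pi * (d - v') = t - f'" "a k * pi * (d - v) = t - f"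
    unfolding f_f'_t_def by (simp_all add: algebra_simps)
  have s1: "sin (t - f') > 0" "sin (t - f) > 0" "sin f > 0" "sin f' > 0"
  proof -
    have "0 < d - v'" "d - v' \<le> x n - x 0" "0 < d - v" "d - v \<le> x n - x 0"
      "0 < v" "v \<le> x n - x 0" "0 < v'" "v' \<le> x n - x 0" using assms by auto
    hence "sin (a k * pi * (d - v')) > 0" "sin (a k * pi * (d - v)) > 0"
       "sin (a k * pi * v) > 0" "sin (a k * pi * v') > 0" using sinpos[OF k] by auto
    thus "sin (t - f') > 0" "sin (t - f) > 0" "sin f > 0" "sin f' > 0"
      using eq unfolding f_f'_t_def by auto
  qed
  have "ln (sin (t - f') / sin f') < ln (sin (t - f) / sin f)"
    using r s1 by (subst ln_less_cancel_iff) auto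
  thus ?thesis using s1 eq unfolding g_def f_f'_t_def[symmetric] by (simp add: ln_div)
qed

end

context setup9 begin

lemma x0le: "j \<le> n \<Longrightarrow> x 0 \<le> x j" and xnle: "j \<le> n \<Longrightarrow> x j \<le> x n"
  using xle by auto

lemma T_lt_mono:
  assumes k: "k \<in> {1..n}" and j: "j \<le> n" "k < j" and s: "x 0 \<le> s" "s < s'" "s' < x (j-1)"
  shows "T j k s < T j k s'"
proof -
  have hx: "x (j-1) < x j" using j k by (intro xlt) auto
  have xj: "x j \<le> x n" using xnle j by auto
  have c: "g k ((x (j-1) - s) + (x j - x (j-1))) - g k (x (j-1) - s)
     < g k ((x (j-1) - s') + (x j - x (j-1))) - g k (x (j-1) - s')"
    using s hx xj by (intro conc[OF k]) auto
  have e: "(x (j-1) - t) + (x j - x (j-1)) = x j - t" for t by simp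
  have nu: "nu k > 0" using nupos k by auto
  have "T j k s = nu k * (g k (x j - s) - g k (x (j-1) - s))"
    unfolding T_def using s hx xj by (subst K_pos[OF k], auto)+ (simp add: algebra_simps)
  moreover have "T j k s' = nu k * (g k (x j - s') - g k (x (j-1) - s'))"
    unfolding T_def using s hx xj by (subst K_pos[OF k], auto)+ (simp add: algebra_simps)
  ultimately show ?thesis using c nu unfolding e by simp
qed

lemma T_gt_mono:
  assumes j: "j \<in> {1..n}" and k: "k \<in> {1..n}" "j < k" and s: "x j < s" "s < s'" "s' \<le> x n"
  shows "T j k s < T j k s'"
proof -
  have hx: "x (j-1) < x j" using j by (intro xlt) auto
  have x0: "x 0 \<le> x (j-1)" using x0le j by auto
  have c: "g k ((s' - x j) + (x j - x (j-1))) - g k (s' - x j)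
     < g k ((s - x j) + (x j - x (j-1))) - g k (s - x j)"
    using s hx x0 k by (intro conc) auto
  have e: "(t - x j) + (x j - x (j-1)) = t - x (j-1)" for t by simp
  have nu: "nu k > 0" using nupos k by auto
  have kk: "K k (x i - t) = K k (t - x i)" for i t using K_neg[of k "t - x i"] by simp
  have "T j k s = nu k * (g k (s - x j) - g k (s - x (j-1)))"
    unfolding T_def kk using s hx x0 k by (subst K_pos, auto)+ (simp add: algebra_simps)
  moreover have "T j k s' = nu k * (g k (s' - x j) - g k (s' - x (j-1)))"
    unfolding T_def kk using s hx x0 k by (subst K_pos, auto)+ (simp add: algebra_simps)
  moreover have "nu k * (g k (s' - x (j-1)) - g k (s' - x j)) < nu k * (g k (s - x (j-1)) - g k (s - x j))"
    using c nu unfolding e by (intro mult_strict_left_mono) auto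
  ultimately show ?thesis by (simp add: algebra_simps)
qed

lemma T_diag_eq:
  assumes j: "j \<in> {1..n}" and s: "x (j-1) < s" "s < x j"
  shows "T j j s = nu j * (g j (x j - s) - g j (s - x (j-1)))"
proof -
  have x0: "x 0 \<le> x (j-1)" using x0le j by auto
  have xj: "x j \<le> x n" using xnle j by auto
  have kk: "K j (x i - t) = K j (t - x i)" for i t using K_neg[of j "t - x i"] by simp
  have "K j (x j - s) = nu j * g j (x j - s)" using s x0 xj j by (intro K_pos) auto
  moreover have "K j (x (j-1) - s) = nu j * g j (s - x (j-1))"
    unfolding kk using s x0 xj j by (intro K_pos) auto
  ultimately show ?thesis unfolding T_def by (simp add: algebra_simps)
qed

lemma T_diag_mono:
  assumes j: "j \<in> {1..n}" and s: "x (j-1) < s" "s < s'" "s' < x j"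
  shows "T j j s' < T j j s"
proof -
  have x0: "x 0 \<le> x (j-1)" using x0le j by auto
  have xj: "x j \<le> x n" using xnle j by auto
  have c: "g j ((x j - x (j-1)) - (s' - x (j-1))) - g j (s' - x (j-1))
     < g j ((x j - x (j-1)) - (s - x (j-1))) - g j (s - x (j-1))"
    using s x0 xj j by (intro Qlem) auto
  have nu: "nu j > 0" using nupos j by auto
  have "nu j * (g j ((x j - x (j-1)) - (s' - x (j-1))) - g j (s' - x (j-1)))
     < nu j * (g j ((x j - x (j-1)) - (s - x (j-1))) - g j (s - x (j-1)))"
    using c nu by (intro mult_strict_left_mono) auto
  thus ?thesis using T_diag_eq[OF j, of s] T_diag_eq[OF j, of s'] s by (simp add: algebra_simps)
qed

lemma Tot_eq: "(\<Sum>j=1..n. T j k s) = K k (x n - s) - K k (x 0 - s)"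
  unfolding T_def using tele[of "\<lambda>j. K k (x j - s)" n] by simp

lemma Tot_mono:
  assumes k: "k \<in> {1..n}" and s: "x 0 < s" "s < s'" "s' < x n"
  shows "(\<Sum>j=1..n. T j k s') < (\<Sum>j=1..n. T j k s)"
proof -
  have kk: "K k (x i - t) = K k (t - x i)" for i t using K_neg[of k "t - x i"] by simp
  have c: "g k ((x n - x 0) - (s' - x 0)) - g k (s' - x 0)
     < g k ((x n - x 0) - (s - x 0)) - g k (s - x 0)"
    using s k by (intro Qlem) auto
  have nu: "nu k > 0" using nupos k by auto
  have e: "(\<Sum>j=1..n. T j k t) = nu k * (g k (x n - t) - g k (t - x 0))" if "x 0 < t" "t < x n" for t
  proof -
    have "K k (x n - t) = nu k * g k (x n - t)" using that k by (intro K_pos) auto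
    moreover have "K k (x 0 - t) = nu k * g k (t - x 0)"
      unfolding kk using that k by (intro K_pos) auto
    ultimately show ?thesis unfolding Tot_eq by (simp add: algebra_simps)
  qed
  have "nu k * (g k ((x n - x 0) - (s' - x 0)) - g k (s' - x 0))
     < nu k * (g k ((x n - x 0) - (s - x 0)) - g k (s - x 0))"
    using c nu by (intro mult_strict_left_mono) auto
  thus ?thesis using e[of s] e[of s'] s by (simp add: algebra_simps)
qed

lemma T_lt_mono_le:
  "k \<in> {1..n} \<Longrightarrow> j \<le> n \<Longrightarrow> k < j \<Longrightarrow> x 0 \<le> s \<Longrightarrow> s \<le> s' \<Longrightarrow> s' < x (j-1) \<Longrightarrow> T j k s \<le> T j k s'"
  using T_lt_mono by (cases "s = s'") (auto intro: less_imp_le)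

lemma T_gt_mono_le:
  "j \<in> {1..n} \<Longrightarrow> k \<in> {1..n} \<Longrightarrow> j < k \<Longrightarrow> x j < s \<Longrightarrow> s \<le> s' \<Longrightarrow> s' \<le> x n \<Longrightarrow> T j k s \<le> T j k s'"
  using T_gt_mono by (cases "s = s'") (auto intro: less_imp_le)

end

context setup9 begin

definition mid :: "nat \<Rightarrow> real" where "mid j = (x (j-1) + x j) / 2"

lemma arg_lt_pi: "k \<in> {1..n} \<Longrightarrow> u \<le> x n - x 0 \<Longrightarrow> a k * pi * u < pi"
proof -
  assume k: "k \<in> {1..n}" and u: "u \<le> x n - x 0"
  have ak: "a k > 0" "a k * (x n - x 0) < 1" using apos aD k by auto
  have "a k * u \<le> a k * (x n - x 0)" using u ak by (intro mult_left_mono) auto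
  hence "a k * u < 1" using ak by linarith
  hence "a k * u * pi < 1 * pi" by (intro mult_strict_right_mono) auto
  thus ?thesis by (simp add: ac_simps)
qed

lemma lowpick:
  assumes j: "j \<in> {1..n}"
  shows "\<exists>s. x (j-1) < s \<and> s \<le> mid j \<and> M \<le> T j j s"
proof -
  have ak: "a j > 0" using apos j by auto
  have nu: "nu j > 0" using nupos j by auto
  have hx: "x (j-1) < x j" using j by (intro xlt) auto
  have dD: "x j - x (j-1) \<le> x n - x 0"
  proof -
    have "x 0 \<le> x (j-1)" "x j \<le> x n" using x0le[of "j-1"] xnle[of j] j by auto
    thus ?thesis by linarith
  qed
  define t where "t = a j * pi * (x j - x (j-1))"
  have t: "0 < t" "t < pi" unfolding t_def using arg_lt_pi[OF j dD] ak hx by auto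
  define E where "E = exp (M / nu j)"
  obtain f where f: "0 < f" "f < t/2" "f < t" "E \<le> sin (t - f) / sin f"
    using blowup[of t E "t/2"] t unfolding E_def by auto
  define s where "s = x (j-1) + f / (a j * pi)"
  have api: "a j * pi > 0" using ak by simp
  have e1: "a j * pi * (s - x (j-1)) = f" unfolding s_def using api ak by simp
  have e2: "a j * pi * (x j - s) = t - f" unfolding s_def t_def using api ak by (simp add: field_simps)
  have s1: "x (j-1) < s" unfolding s_def using f api by simp
  have "f \<le> ((x j - x (j-1)) / 2) * (a j * pi)"
    using f(2) unfolding t_def by (simp add: algebra_simps)
  hence "f / (a j * pi) \<le> (x j - x (j-1)) / 2"
    using api by (simp add: pos_divide_le_eq)
  hence s2: "s \<le> mid j" unfolding s_def mid_def by simp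
  have s3: "s < x j" using s2 hx unfolding mid_def by simp
  have sf: "sin f > 0" "sin (t - f) > 0" using f t by (auto intro!: sin_gt_zero)
  have "T j j s = nu j * ln (sin (t - f) / sin f)"
    unfolding T_diag_eq[OF j s1 s3] g_def e1 e2 using sf by (simp add: ln_div)
  moreover have "ln E \<le> ln (sin (t - f) / sin f)" using f sf unfolding E_def by (subst ln_le_cancel_iff) auto
  hence "M / nu j \<le> ln (sin (t - f) / sin f)" unfolding E_def by simp
  hence "M \<le> nu j * ln (sin (t - f) / sin f)" using nu by (simp add: field_simps)
  ultimately show ?thesis using s1 s2 by auto
qed

lemma highpick:
  assumes j: "j \<in> {1..n}"
  shows "\<exists>s. mid j \<le> s \<and> s < x j \<and> T j j s \<le> M"
proof -
  have ak: "a j > 0" using apos j by auto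
  have nu: "nu j > 0" using nupos j by auto
  have hx: "x (j-1) < x j" using j by (intro xlt) auto
  have dD: "x j - x (j-1) \<le> x n - x 0"
  proof -
    have "x 0 \<le> x (j-1)" "x j \<le> x n" using x0le[of "j-1"] xnle[of j] j by auto
    thus ?thesis by linarith
  qed
  define t where "t = a j * pi * (x j - x (j-1))"
  have t: "0 < t" "t < pi" unfolding t_def using arg_lt_pi[OF j dD] ak hx by auto
  define E where "E = exp (- M / nu j)"
  obtain f where f: "0 < f" "f < t/2" "f < t" "E \<le> sin (t - f) / sin f"
    using blowup[of t E "t/2"] t unfolding E_def by auto
  define s where "s = x j - f / (a j * pi)"
  have api: "a j * pi > 0" using ak by simp
  have e1: "a j * pi * (x j - s) = f" unfolding s_def using api ak by simp
  have e2: "a j * pi * (s - x (j-1)) = t - f" unfolding s_def t_def using api ak by (simp add: field_simps)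
  have s1: "s < x j" unfolding s_def using f api by simp
  have "f \<le> ((x j - x (j-1)) / 2) * (a j * pi)"
    using f(2) unfolding t_def by (simp add: algebra_simps)
  hence "f / (a j * pi) \<le> (x j - x (j-1)) / 2"
    using api by (simp add: pos_divide_le_eq)
  hence s2: "mid j \<le> s" unfolding s_def mid_def by simp
  have s3: "x (j-1) < s" using s2 hx unfolding mid_def by simp
  have sf: "sin f > 0" "sin (t - f) > 0" using f t by (auto intro!: sin_gt_zero)
  have "T j j s = - (nu j * ln (sin (t - f) / sin f))"
    unfolding T_diag_eq[OF j s3 s1] g_def e1 e2 using sf by (simp add: ln_div algebra_simps)
  moreover have "ln E \<le> ln (sin (t - f) / sin f)" using f sf unfolding E_def by (subst ln_le_cancel_iff) auto
  hence "- M / nu j \<le> ln (sin (t - f) / sin f)" unfolding E_def by simp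
  hence "- M \<le> nu j * ln (sin (t - f) / sin f)" using nu by (simp add: field_simps)
  ultimately show ?thesis using s1 s2 by auto
qed

lemma T_diag_cont:
  assumes j: "j \<in> {1..n}" and "x (j-1) < lo" "hi < x j"
  shows "continuous_on {lo..hi} (T j j)"
proof -
  have x0: "x 0 \<le> x (j-1)" using x0le j by auto
  have xj: "x j \<le> x n" using xnle j by auto
  have nz: "\<bar>sin (a j * pi * (x j - s))\<bar> \<noteq> 0" "\<bar>sin (a j * pi * (x (j-1) - s))\<bar> \<noteq> 0"
    if "s \<in> {lo..hi}" for s
  proof -
    have "sin (a j * pi * (x j - s)) > 0" using that assms x0 xj by (intro sinpos[OF j]) auto
    moreover have "sin (a j * pi * (s - x (j-1))) > 0" using that assms x0 xj by (intro sinpos[OF j]) auto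
    moreover have "sin (a j * pi * (x (j-1) - s)) = - sin (a j * pi * (s - x (j-1)))"
      by (metis minus_diff_eq mult_minus_right sin_minus)
    ultimately show "\<bar>sin (a j * pi * (x j - s))\<bar> \<noteq> 0" "\<bar>sin (a j * pi * (x (j-1) - s))\<bar> \<noteq> 0" by auto
  qed
  show ?thesis unfolding T_def[abs_def] K_def
    by (intro continuous_intros) (use nz in auto)
qed

end

context setup9 begin

lemma sum_split_up:
  assumes j: "j \<in> {1..n}"
  shows "(\<Sum>k=1..n. f k) = f j + (if j < n then f (j+1) else 0) + (\<Sum>k\<in>{1..n}-{j,j+1}. f k :: real)"
proof -
  have a: "(\<Sum>k=1..n. f k) = f j + (\<Sum>k\<in>{1..n}-{j}. f k)" using j by (simp add: sum.remove)
  show ?thesis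
  proof (cases "j < n")
    case True
    have "(\<Sum>k\<in>{1..n}-{j}. f k) = f (j+1) + (\<Sum>k\<in>{1..n}-{j}-{j+1}. f k)"
      using True j by (intro sum.remove) auto
    moreover have "{1..n}-{j}-{j+1} = {1..n}-{j,j+1}" by auto
    ultimately show ?thesis using a True by simp
  next
    case False
    have "{1..n}-{j} = {1..n}-{j,j+1}" using False by auto
    thus ?thesis using a False by simp
  qed
qed

lemma sum_split_down:
  assumes j: "j \<in> {1..n}"
  shows "(\<Sum>k=1..n. f k) = f j + (if 1 < j then f (j-1) else 0) + (\<Sum>k\<in>{1..n}-{j-1,j}. f k :: real)"
proof -
  have a: "(\<Sum>k=1..n. f k) = f j + (\<Sum>k\<in>{1..n}-{j}. f k)" using j by (simp add: sum.remove)
  show ?thesis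
  proof (cases "1 < j")
    case True
    have "(\<Sum>k\<in>{1..n}-{j}. f k) = f (j-1) + (\<Sum>k\<in>{1..n}-{j}-{j-1}. f k)"
      using True j by (intro sum.remove) auto
    moreover have "{1..n}-{j}-{j-1} = {1..n}-{j-1,j}" by auto
    ultimately show ?thesis using a True by simp
  next
    case False
    have "{1..n}-{j} = {1..n}-{j-1,j}" using False j by auto
    thus ?thesis using a False by simp
  qed
qed

lemma mid_lt: "j \<in> {1..n} \<Longrightarrow> x (j-1) < mid j \<and> mid j < x j"
  using xlt[of "j-1" j] unfolding mid_def by auto

definition mlow where "mlow j = (\<Sum>k\<in>{1..n}-{j,j+1}. T j k (x (k-1)))"
definition mhigh where "mhigh j = (\<Sum>k\<in>{1..n}-{j-1,j}. T j k (x k))"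

definition Plow where "Plow c l j \<longleftrightarrow> x (j-1) < l j \<and> l j \<le> mid j \<and>
   c j - mlow j - (if j < n then T j (j+1) (l (j+1)) else 0) \<le> T j j (l j)"
definition Phigh where "Phigh c u j \<longleftrightarrow> mid j \<le> u j \<and> u j < x j \<and>
   T j j (u j) \<le> c j - mhigh j - (if 1 < j then T j (j-1) (u (j-1)) else 0)"

lemma low_exists: "\<exists>l. \<forall>j\<in>{1..n}. Plow c l j"
proof -
  have "i \<le> n \<Longrightarrow> \<exists>l. \<forall>j. n - i < j \<and> j \<le> n \<longrightarrow> Plow c l j" for i
  proof (induction i)
    case 0 then show ?case by auto
  next
    case (Suc i)
    then obtain l where l: "\<forall>j. n - i < j \<and> j \<le> n \<longrightarrow> Plow c l j" by auto
    define j0 where "j0 = n - i"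
    have j0: "j0 \<in> {1..n}" using Suc.prems unfolding j0_def by auto
    obtain s where s: "x (j0-1) < s" "s \<le> mid j0"
      "c j0 - mlow j0 - (if j0 < n then T j0 (j0+1) (l (j0+1)) else 0) \<le> T j0 j0 s"
      using lowpick[OF j0] by blast
    have "\<forall>j. n - Suc i < j \<and> j \<le> n \<longrightarrow> Plow c (l(j0 := s)) j"
    proof (intro allI impI)
      fix j assume j: "n - Suc i < j \<and> j \<le> n"
      show "Plow c (l(j0 := s)) j"
      proof (cases "j = j0")
        case True then show ?thesis using s unfolding Plow_def by auto
      next
        case False
        hence "n - i < j" using j Suc.prems unfolding j0_def by auto
        hence "Plow c l j" using l j by auto
        thus ?thesis using False \<open>n - i < j\<close> unfolding Plow_def j0_def by auto
      qed
    qed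
    thus ?case by blast
  qed
  from this[of n] obtain l where "\<forall>j. n - n < j \<and> j \<le> n \<longrightarrow> Plow c l j" by auto
  hence "\<forall>j\<in>{1..n}. Plow c l j" by auto
  thus ?thesis by blast
qed

lemma high_exists: "\<exists>u. \<forall>j\<in>{1..n}. Phigh c u j"
proof -
  have "i \<le> n \<Longrightarrow> \<exists>u. \<forall>j. 1 \<le> j \<and> j \<le> i \<longrightarrow> Phigh c u j" for i
  proof (induction i)
    case 0 then show ?case by auto
  next
    case (Suc i)
    then obtain u where u: "\<forall>j. 1 \<le> j \<and> j \<le> i \<longrightarrow> Phigh c u j" by auto
    define j0 where "j0 = Suc i"
    have j0: "j0 \<in> {1..n}" using Suc.prems unfolding j0_def by auto
    obtain s where s: "mid j0 \<le> s" "s < x j0"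
      "T j0 j0 s \<le> c j0 - mhigh j0 - (if 1 < j0 then T j0 (j0-1) (u (j0-1)) else 0)"
      using highpick[OF j0] by blast
    have "\<forall>j. 1 \<le> j \<and> j \<le> Suc i \<longrightarrow> Phigh c (u(j0 := s)) j"
    proof (intro allI impI)
      fix j assume j: "1 \<le> j \<and> j \<le> Suc i"
      show "Phigh c (u(j0 := s)) j"
      proof (cases "j = j0")
        case True then show ?thesis using s unfolding Phigh_def j0_def by auto
      next
        case False
        hence "j \<le> i" using j unfolding j0_def by auto
        hence "Phigh c u j" using u j by auto
        thus ?thesis using False \<open>j \<le> i\<close> unfolding Phigh_def j0_def by auto
      qed
    qed
    thus ?case by blast
  qed
  from this[of n] obtain u where "\<forall>j. 1 \<le> j \<and> j \<le> n \<longrightarrow> Phigh c u j" by auto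
  hence "\<forall>j\<in>{1..n}. Phigh c u j" by auto
  thus ?thesis by blast
qed

lemma low_G:
  assumes l: "\<forall>j\<in>{1..n}. Plow c l j" and j: "j \<in> {1..n}"
  shows "c j \<le> G l j"
proof -
  have lk: "x (k-1) < l k" "l k < x k" if "k \<in> {1..n}" for k
    using l that mid_lt[OF that] unfolding Plow_def by force+
  have "mlow j \<le> (\<Sum>k\<in>{1..n}-{j,j+1}. T j k (l k))"
    unfolding mlow_def
  proof (rule sum_mono)
    fix k assume k: "k \<in> {1..n}-{j,j+1}"
    hence k1: "k \<in> {1..n}" by auto
    show "T j k (x (k-1)) \<le> T j k (l k)"
    proof (cases "k < j")
      case True
      have "x k \<le> x (j-1)" using True j by (intro xle) auto
      thus ?thesis using True j k1 lk[OF k1] x0le[of "k-1"]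
        by (intro T_lt_mono_le) auto
    next
      case False
      hence "j + 1 < k" using k by auto
      hence "x j < x (k-1)" using k1 by (intro xlt) auto
      thus ?thesis using False j k1 lk[OF k1] xnle[of k] \<open>j+1<k\<close>
        by (intro T_gt_mono_le) auto
    qed
  qed
  moreover have "c j - mlow j - (if j < n then T j (j+1) (l (j+1)) else 0) \<le> T j j (l j)"
    using l j unfolding Plow_def by auto
  ultimately show ?thesis unfolding G_def sum_split_up[OF j] by auto
qed

lemma high_G:
  assumes u: "\<forall>j\<in>{1..n}. Phigh c u j" and j: "j \<in> {1..n}"
  shows "G u j \<le> c j"
proof -
  have uk: "x (k-1) < u k" "u k < x k" if "k \<in> {1..n}" for k
    using u that mid_lt[OF that] unfolding Phigh_def by force+
  have "(\<Sum>k\<in>{1..n}-{j-1,j}. T j k (u k)) \<le> mhigh j"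
    unfolding mhigh_def
  proof (rule sum_mono)
    fix k assume k: "k \<in> {1..n}-{j-1,j}"
    hence k1: "k \<in> {1..n}" by auto
    show "T j k (u k) \<le> T j k (x k)"
    proof (cases "k < j")
      case True
      hence "k < j - 1" using k by auto
      hence "x k < x (j-1)" using j by (intro xlt) auto
      moreover have "x 0 \<le> x (k-1)" using k1 x0le[of "k-1"] by auto
      ultimately show ?thesis using True j k1 uk[OF k1]
        by (intro T_lt_mono_le) auto
    next
      case False
      hence "j < k" using k by auto
      hence "x j \<le> x (k-1)" using k1 by (intro xle) auto
      thus ?thesis using False j k1 uk[OF k1] xnle[of k] \<open>j<k\<close>
        by (intro T_gt_mono_le) auto
    qed
  qed
  moreover have "T j j (u j) \<le> c j - mhigh j - (if 1 < j then T j (j-1) (u (j-1)) else 0)"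
    using u j unfolding Phigh_def by auto
  ultimately show ?thesis unfolding G_def sum_split_down[OF j] by auto
qed

end

context setup9 begin

lemma T_off_mono:
  assumes j: "j \<in> {1..n}" and k: "k \<in> {1..n}" "k \<noteq> j" and s: "x (k-1) < s" "s \<le> s'" "s' < x k"
  shows "T j k s \<le> T j k s'"
proof (cases "k < j")
  case True
  have "x k \<le> x (j-1)" using True j by (intro xle) auto
  moreover have "x 0 \<le> x (k-1)" using x0le[of "k-1"] k by auto
  ultimately show ?thesis using True j k s by (intro T_lt_mono_le) auto
next
  case False
  hence "j < k" using k by auto
  hence "x j \<le> x (k-1)" using k by (intro xle) auto
  moreover have "x k \<le> x n" using xnle k by auto
  ultimately show ?thesis using \<open>j<k\<close> j k s by (intro T_gt_mono_le) auto
qed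

lemma G_upd: "j \<in> {1..n} \<Longrightarrow> G (y(j:=s)) j = T j j s + (\<Sum>k\<in>{1..n}-{j}. T j k (y k))"
  unfolding G_def by (simp add: sum.remove)

lemma exists_sol: "\<exists>y. inbox y \<and> (\<forall>j\<in>{1..n}. G y j = c j)"
proof -
  obtain l where lP: "\<forall>j\<in>{1..n}. Plow c l j" using low_exists by blast
  obtain u where uP: "\<forall>j\<in>{1..n}. Phigh c u j" using high_exists by blast
  have lk: "x (k-1) < l k" "l k \<le> u k" "u k < x k" if "k \<in> {1..n}" for k
    using lP uP that mid_lt[OF that] unfolding Plow_def Phigh_def by force+
  have Gl: "c j \<le> G l j" if "j \<in> {1..n}" for j using low_G[OF lP that] .
  have Gu: "G u j \<le> c j" if "j \<in> {1..n}" for j using high_G[OF uP that] .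
  define box where "box y \<longleftrightarrow> (\<forall>k\<in>{1..n}. l k \<le> y k \<and> y k \<le> u k)" for y
  have omono: "G (y(j:=s)) j \<le> G (y'(j:=s)) j"
    if "box y" "box y'" "\<forall>k\<in>{1..n}. y k \<le> y' k" "j \<in> {1..n}" for y y' j s
  proof -
    have "(\<Sum>k\<in>{1..n}-{j}. T j k (y k)) \<le> (\<Sum>k\<in>{1..n}-{j}. T j k (y' k))"
    proof (rule sum_mono)
      fix k assume k: "k \<in> {1..n}-{j}"
      show "T j k (y k) \<le> T j k (y' k)"
        using that k lk[of k] unfolding box_def by (intro T_off_mono) force+
    qed
    thus ?thesis using G_upd[OF that(4)] by simp
  qed
  have dmono: "G (y(j:=s')) j < G (y(j:=s)) j"
    if "j \<in> {1..n}" "x (j-1) < s" "s < s'" "s' < x j" for y j s s'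
    using G_upd[OF that(1)] T_diag_mono[OF that] by simp
  have ex: "\<exists>s. l j \<le> s \<and> s \<le> u j \<and> G (y(j:=s)) j = c j" if "box y" "j \<in> {1..n}" for y j
  proof -
    have "box l" "box u" unfolding box_def using lk by force+
    have yu: "\<forall>k\<in>{1..n}. y k \<le> u k" "\<forall>k\<in>{1..n}. l k \<le> y k" using that unfolding box_def by auto
    have "G (y(j := u j)) j \<le> G (u(j := u j)) j"
      using omono[OF that(1) \<open>box u\<close> yu(1) that(2)] .
    hence a: "G (y(j := u j)) j \<le> c j" using Gu[OF that(2)] by simp
    have "G (l(j := l j)) j \<le> G (y(j := l j)) j"
      using omono[OF \<open>box l\<close> that(1) yu(2) that(2)] .
    hence b: "c j \<le> G (y(j := l j)) j" using Gl[OF that(2)] by simp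
    have cont: "continuous_on {l j..u j} (\<lambda>s. G (y(j:=s)) j)"
      unfolding G_upd[OF that(2)]
      by (intro continuous_intros T_diag_cont[OF that(2)]) (use lk[OF that(2)] in auto)
    show ?thesis using IVT2'[of "\<lambda>s. G (y(j:=s)) j", OF a b _ cont] lk[OF that(2)] by auto
  qed
  have un: "s = s'" if "j \<in> {1..n}" "l j \<le> s" "s \<le> u j" "G (y(j:=s)) j = c j"
     "l j \<le> s'" "s' \<le> u j" "G (y(j:=s')) j = c j" for y j s s'
  proof (rule ccontr)
    assume "s \<noteq> s'"
    hence "s < s' \<or> s' < s" by auto
    thus False using dmono[of j s s' y] dmono[of j s' s y] that lk[OF that(1)] by auto
  qed
  define B where "B y j = (THE s. l j \<le> s \<and> s \<le> u j \<and> G (y(j:=s)) j = c j)" for y j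
  have Bp: "l j \<le> B y j \<and> B y j \<le> u j \<and> G (y(j:=B y j)) j = c j" if "box y" "j \<in> {1..n}" for y j
  proof -
    have "\<exists>!s. l j \<le> s \<and> s \<le> u j \<and> G (y(j:=s)) j = c j"
      using ex[OF that] un[OF that(2)] by blast
    thus ?thesis unfolding B_def by (rule theI')
  qed
  have Bmono: "B y j \<le> B y' j"
    if "box y" "box y'" "\<forall>k\<in>{1..n}. y k \<le> y' k" "j \<in> {1..n}" for y y' j
  proof (rule ccontr)
    assume "\<not> B y j \<le> B y' j"
    hence lt: "B y' j < B y j" by simp
    have "G (y(j := B y j)) j \<le> G (y'(j := B y j)) j" using omono that by blast
    moreover have "G (y'(j := B y j)) j < G (y'(j := B y' j)) j"
      using dmono[of j "B y' j" "B y j" y'] lt Bp[OF that(2,4)] Bp[OF that(1,4)] lk[OF that(4)] that(4) by auto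
    ultimately show False using Bp[OF that(1,4)] Bp[OF that(2,4)] by simp
  qed
  define A where "A = {y. box y \<and> (\<forall>k\<in>{1..n}. y k \<le> B y k)}"
  define ys where "ys k = Sup ((\<lambda>y. y k) ` A)" for k
  have lA: "l \<in> A" unfolding A_def using Bp lk unfolding box_def by force
  have bdd: "bdd_above ((\<lambda>y. y k) ` A)" if "k \<in> {1..n}" for k
    unfolding A_def box_def using that by (intro bdd_aboveI[of _ "u k"]) auto
  have upper: "z k \<le> ys k" if "z \<in> A" "k \<in> {1..n}" for z k
    unfolding ys_def using bdd[OF that(2)] that(1) by (intro cSup_upper) auto
  have boxys: "box ys" unfolding box_def
  proof
    fix k assume k: "k \<in> {1..n}"
    have "l k \<le> ys k" using upper[OF lA k] .
    moreover have "ys k \<le> u k" unfolding ys_def using lA k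
      by (intro cSup_least) (auto simp: A_def box_def)
    ultimately show "l k \<le> ys k \<and> ys k \<le> u k" by simp
  qed
  have ysB: "ys k \<le> B ys k" if k: "k \<in> {1..n}" for k
    unfolding ys_def[of k]
  proof (rule cSup_least)
    show "(\<lambda>y. y k) ` A \<noteq> {}" using lA by auto
  next
    fix t assume "t \<in> (\<lambda>y. y k) ` A"
    then obtain z where z: "z \<in> A" "t = z k" by auto
    have "z k \<le> B z k" using z k unfolding A_def by auto
    also have "B z k \<le> B ys k" using z boxys upper k by (intro Bmono) (auto simp: A_def)
    finally show "t \<le> B ys k" using z by simp
  qed
  define w where "w = (\<lambda>k. B ys k)"
  have boxw: "box w" unfolding box_def w_def using Bp[OF boxys] by auto
  have "w k \<le> B w k" if "k \<in> {1..n}" for k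
    unfolding w_def using Bmono[OF boxys boxw _ that] ysB unfolding w_def by auto
  hence "w \<in> A" unfolding A_def using boxw by auto
  hence fixp: "B ys k = ys k" if "k \<in> {1..n}" for k
    using upper[of w k] ysB[OF that] that unfolding w_def by auto
  have "inbox ys" unfolding inbox_def
  proof
    fix k assume k: "k \<in> {1..n}"
    have "l k \<le> ys k" "ys k \<le> u k" using boxys k unfolding box_def by auto
    thus "x (k-1) < ys k \<and> ys k < x k" using lk[OF k] by linarith
  qed
  moreover have "G ys j = c j" if "j \<in> {1..n}" for j
    using Bp[OF boxys that] fixp[OF that] by simp
  ultimately show ?thesis by blast
qed

end

context setup9 begin

lemma uniq_y:
  assumes y: "inbox y" and y': "inbox y'" and eq: "\<forall>j\<in>{1..n}. G y j = G y' j"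
  shows "\<forall>k\<in>{1..n}. y' k \<le> y k"
proof (rule ccontr)
  assume "\<not> (\<forall>k\<in>{1..n}. y' k \<le> y k)"
  define I where "I = {k\<in>{1..n}. y k < y' k}"
  have Ine: "I \<noteq> {}" using \<open>\<not> _\<close> unfolding I_def by force
  have Isub: "I \<subseteq> {1..n}" unfolding I_def by auto
  have fI: "finite I" using Isub finite_subset by blast
  have yk: "x (k-1) < y k" "y k < x k" "x (k-1) < y' k" "y' k < x k" if "k \<in> {1..n}" for k
    using y y' that unfolding inbox_def by auto
  define phi where "phi k s = (\<Sum>j\<in>I. T j k s)" for k s
  have sw: "(\<Sum>j\<in>I. G z j) = (\<Sum>k=1..n. phi k (z k))" for z
    unfolding G_def phi_def by (rule sum.swap)
  have "(\<Sum>k=1..n. phi k (y' k)) < (\<Sum>k=1..n. phi k (y k))"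
  proof (rule sum_strict_mono_ex1)
    show "finite {1..n}" by simp
  next
    show "\<forall>k\<in>{1..n}. phi k (y' k) \<le> phi k (y k)"
    proof
      fix k assume k: "k \<in> {1..n}"
      show "phi k (y' k) \<le> phi k (y k)"
      proof (cases "k \<in> I")
        case True
        have split: "(\<Sum>j=1..n. T j k s) = (\<Sum>j\<in>{1..n}-I. T j k s) + phi k s" for s
          unfolding phi_def using Isub by (intro sum.subset_diff) auto
        have x0: "x 0 \<le> x (k-1)" "x k \<le> x n" using x0le[of "k-1"] xnle[of k] k by auto
        have "(\<Sum>j=1..n. T j k (y' k)) < (\<Sum>j=1..n. T j k (y k))"
          using True yk[OF k] x0 unfolding I_def by (intro Tot_mono[OF k]) auto
        moreover have "(\<Sum>j\<in>{1..n}-I. T j k (y k)) \<le> (\<Sum>j\<in>{1..n}-I. T j k (y' k))"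
        proof (rule sum_mono)
          fix j assume j: "j \<in> {1..n}-I"
          show "T j k (y k) \<le> T j k (y' k)"
            using j True yk[OF k] k unfolding I_def by (intro T_off_mono) auto
        qed
        ultimately show ?thesis unfolding split by simp
      next
        case False
        hence le: "y' k \<le> y k" using k unfolding I_def by auto
        show ?thesis unfolding phi_def
        proof (rule sum_mono)
          fix j assume j: "j \<in> I"
          show "T j k (y' k) \<le> T j k (y k)"
            using j False yk[OF k] k le Isub by (intro T_off_mono) auto
        qed
      qed
    qed
  next
    obtain k where k: "k \<in> I" using Ine by auto
    have kn: "k \<in> {1..n}" using k Isub by auto
    have x0: "x 0 \<le> x (k-1)" "x k \<le> x n" using x0le[of "k-1"] xnle[of k] kn by auto
    have split: "(\<Sum>j=1..n. T j k s) = (\<Sum>j\<in>{1..n}-I. T j k s) + phi k s" for s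
      unfolding phi_def using Isub by (intro sum.subset_diff) auto
    have "(\<Sum>j=1..n. T j k (y' k)) < (\<Sum>j=1..n. T j k (y k))"
      using k yk[OF kn] x0 unfolding I_def by (intro Tot_mono[OF kn]) auto
    moreover have "(\<Sum>j\<in>{1..n}-I. T j k (y k)) \<le> (\<Sum>j\<in>{1..n}-I. T j k (y' k))"
    proof (rule sum_mono)
      fix j assume j: "j \<in> {1..n}-I"
      show "T j k (y k) \<le> T j k (y' k)"
        using j k yk[OF kn] kn unfolding I_def by (intro T_off_mono) auto
    qed
    ultimately have "phi k (y' k) < phi k (y k)" unfolding split by simp
    thus "\<exists>k\<in>{1..n}. phi k (y' k) < phi k (y k)" using kn by blast
  qed
  moreover have "(\<Sum>j\<in>I. G y j) = (\<Sum>j\<in>I. G y' j)" using eq Isub by (intro sum.cong) auto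
  ultimately show False unfolding sw by simp
qed

lemma sin_sign:
  assumes y: "inbox y" and j: "j \<le> n" and k: "k \<in> {1..n}"
  shows "k \<le> j \<Longrightarrow> sin (a k * pi * (x j - y k)) > 0"
    and "j < k \<Longrightarrow> sin (a k * pi * (x j - y k)) < 0"
proof -
  have yk: "x (k-1) < y k" "y k < x k" using y k unfolding inbox_def by auto
  have x0: "x 0 \<le> x (k-1)" "x k \<le> x n" "x 0 \<le> x j" "x j \<le> x n"
    using x0le[of "k-1"] xnle[of k] k j x0le[of j] xnle[of j] by auto
  show "k \<le> j \<Longrightarrow> sin (a k * pi * (x j - y k)) > 0"
  proof -
    assume "k \<le> j"
    hence "x k \<le> x j" using j by (intro xle) auto
    thus ?thesis using yk x0 by (intro sinpos[OF k]) auto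
  qed
  show "j < k \<Longrightarrow> sin (a k * pi * (x j - y k)) < 0"
  proof -
    assume "j < k"
    hence "x j \<le> x (k-1)" using k by (intro xle) auto
    hence "sin (a k * pi * (y k - x j)) > 0" using yk x0 by (intro sinpos[OF k]) auto
    moreover have "sin (a k * pi * (x j - y k)) = - sin (a k * pi * (y k - x j))"
      by (metis minus_diff_eq mult_minus_right sin_minus)
    ultimately show ?thesis by simp
  qed
qed

lemma sin_nz: "inbox y \<Longrightarrow> j \<le> n \<Longrightarrow> k \<in> {1..n} \<Longrightarrow> sin (a k * pi * (x j - y k)) \<noteq> 0"
  using sin_sign[of y j k] by (cases "k \<le> j") auto

lemma S_eq: "inbox y \<Longrightarrow> j \<le> n \<Longrightarrow> S_fun n C a nu y (x j) = C * exp (L y j)"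
proof -
  assume y: "inbox y" and j: "j \<le> n"
  have "(\<Prod>k=1..n. \<bar>sin (a k * pi * (x j - y k))\<bar> powr nu k) = (\<Prod>k=1..n. exp (K k (x j - y k)))"
    by (rule prod.cong) (use sin_nz[OF y j] in \<open>auto simp: powr_def K_def\<close>)
  thus ?thesis unfolding S_fun_def L_def by (simp add: exp_sum)
qed

lemma G_L: "G y j = L y j - L y (j-1)"
  unfolding G_def T_def L_def by (simp add: sum_subtractf)

lemma sol_iff: "is_solution n x a nu alpha C y \<longleftrightarrow>
   C > 0 \<and> inbox y \<and> (\<forall>j\<le>n. C * exp (L y j) = alpha j)"
proof -
  have b: "(\<forall>j<n. x j < y (j+1) \<and> y (j+1) < x (j+1)) \<longleftrightarrow> inbox y"
    unfolding inbox_def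
  proof
    assume h: "\<forall>j<n. x j < y (j+1) \<and> y (j+1) < x (j+1)"
    show "\<forall>k\<in>{1..n}. x (k-1) < y k \<and> y k < x k"
    proof
      fix k assume k: "k \<in> {1..n}"
      then have "k - 1 < n" "k - 1 + 1 = k" by auto
      then show "x (k-1) < y k \<and> y k < x k" using h by metis
    qed
  next
    assume h: "\<forall>k\<in>{1..n}. x (k-1) < y k \<and> y k < x k"
    show "\<forall>j<n. x j < y (j+1) \<and> y (j+1) < x (j+1)"
    proof (intro allI impI)
      fix j assume "j < n"
      then have "j+1 \<in> {1..n}" by auto
      then show "x j < y (j+1) \<and> y (j+1) < x (j+1)" using h by force
    qed
  qed
  show ?thesis unfolding is_solution_def b using S_eq by auto
qed

lemma partA:
  assumes alphapos: "\<forall>j\<le>n. alpha j > 0"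
  shows "\<exists>C y. is_solution n x a nu alpha C y \<and>
            (\<forall>C' y'. is_solution n x a nu alpha C' y' \<longrightarrow> C' = C \<and> (\<forall>k\<in>{1..n}. y' k = y k))"
proof -
  define c where "c j = ln (alpha j) - ln (alpha (j-1))" for j
  have solG: "\<forall>j\<in>{1..n}. G y j = c j" if "is_solution n x a nu alpha C y" for C y
  proof
    fix j assume j: "j \<in> {1..n}"
    have h: "C > 0" "\<forall>j\<le>n. C * exp (L y j) = alpha j" using that sol_iff by auto
    have "ln C + L y i = ln (alpha i)" if "i \<le> n" for i
    proof -
      have "ln (C * exp (L y i)) = ln C + L y i" using h(1) by (simp add: ln_mult)
      moreover have "C * exp (L y i) = alpha i" using h(2) that by auto
      ultimately show ?thesis by simp
    qed
    hence a1: "ln C + L y j = ln (alpha j)" and a2: "ln C + L y (j-1) = ln (alpha (j-1))"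
      using j by auto
    show "G y j = c j" unfolding G_L c_def using a1 a2 by linarith
  qed
  obtain y where y: "inbox y" "\<forall>j\<in>{1..n}. G y j = c j" using exists_sol by blast
  define C where "C = alpha 0 / exp (L y 0)"
  have Lj: "L y j = L y 0 + ln (alpha j) - ln (alpha 0)" if "j \<le> n" for j
    using that
  proof (induction j)
    case 0 then show ?case by simp
  next
    case (Suc j)
    have "G y (Suc j) = c (Suc j)" using y Suc.prems by auto
    then show ?case using Suc unfolding G_L c_def by auto
  qed
  have sol: "is_solution n x a nu alpha C y"
    unfolding sol_iff
  proof (intro conjI allI impI)
    show "C > 0" unfolding C_def using alphapos by auto
    show "inbox y" by fact
    fix j assume j: "j \<le> n"
    have e1: "C * exp (L y j) = alpha 0 * exp (L y j - L y 0)" unfolding C_def by (simp add: exp_diff)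
    have p: "alpha 0 > 0" "alpha j > 0" using alphapos j by auto
    have "L y j - L y 0 = ln (alpha j) - ln (alpha 0)" using Lj[OF j] by simp
    hence "exp (L y j - L y 0) = alpha j / alpha 0" using p by (simp add: exp_diff)
    thus "C * exp (L y j) = alpha j" using e1 p by simp
  qed
  have "C' = C \<and> (\<forall>k\<in>{1..n}. y' k = y k)" if "is_solution n x a nu alpha C' y'" for C' y'
  proof -
    have y': "inbox y'" "C' > 0" "\<forall>j\<le>n. C' * exp (L y' j) = alpha j" using that sol_iff by auto
    have G': "\<forall>j\<in>{1..n}. G y' j = c j" using solG[OF that] .
    have "\<forall>k\<in>{1..n}. y' k \<le> y k" using uniq_y[OF y(1) y'(1)] y(2) G' by auto
    moreover have "\<forall>k\<in>{1..n}. y k \<le> y' k" using uniq_y[OF y'(1) y(1)] y(2) G' by auto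
    ultimately have yy: "\<forall>k\<in>{1..n}. y' k = y k" by force
    hence "L y' 0 = L y 0" unfolding L_def by (intro sum.cong) auto
    hence "C' = alpha 0 / exp (L y 0)" using y'(3) by (auto simp: field_simps)
    thus ?thesis using yy unfolding C_def by auto
  qed
  thus ?thesis using sol by blast
qed

end

context setup9 begin

lemma partB:
  assumes nat: "\<forall>k\<in>{1..n}. nu k \<in> \<nat>" and sol: "is_solution n x a nu alpha C y" and j: "j \<le> n"
  shows "T_fun n C a nu y (x j) = (-1) ^ (\<Sum>k = j+1..n. nat \<lfloor>nu k\<rfloor>) * alpha j"
proof -
  define m where "m k = nat \<lfloor>nu k\<rfloor>" for k
  have mk: "real (m k) = nu k" if "k \<in> {1..n}" for k
  proof -
    have "nu k \<in> \<nat>" using nat that by auto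
    then obtain q where "nu k = of_nat q" by (auto elim: Nats_cases)
    thus ?thesis unfolding m_def by simp
  qed
  have y: "inbox y" and al: "C * exp (L y j) = alpha j" using sol j sol_iff by auto
  define s where "s k = sin (a k * pi * (x j - y k))" for k
  have "alpha j = S_fun n C a nu y (x j)" using S_eq[OF y j] al by simp
  also have "\<dots> = C * (\<Prod>k=1..n. \<bar>s k\<bar> ^ m k)"
    unfolding S_fun_def s_def[symmetric]
  proof -
    have "(\<Prod>k=1..n. \<bar>s k\<bar> powr nu k) = (\<Prod>k=1..n. \<bar>s k\<bar> ^ m k)"
    proof (rule prod.cong)
      fix k assume k: "k \<in> {1..n}"
      have "\<bar>s k\<bar> > 0" using sin_nz[OF y j k] unfolding s_def by simp
      thus "\<bar>s k\<bar> powr nu k = \<bar>s k\<bar> ^ m k" using mk[OF k, symmetric] by (simp add: powr_realpow)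
    qed simp
    thus "C * (\<Prod>k=1..n. \<bar>s k\<bar> powr nu k) = C * (\<Prod>k=1..n. \<bar>s k\<bar> ^ m k)" by simp
  qed
  finally have alj: "alpha j = C * (\<Prod>k=1..n. \<bar>s k\<bar> ^ m k)" .
  have "(\<Prod>k=1..n. s k ^ m k) = (\<Prod>k=1..n. (if j < k then (-1) ^ m k else 1) * \<bar>s k\<bar> ^ m k)"
  proof (rule prod.cong)
    fix k assume k: "k \<in> {1..n}"
    show "s k ^ m k = (if j < k then (-1) ^ m k else 1) * \<bar>s k\<bar> ^ m k"
    proof (cases "j < k")
      case True
      have "s k < 0" using sin_sign(2)[OF y j k] True unfolding s_def by simp
      hence "s k = - \<bar>s k\<bar>" by simp
      hence "s k ^ m k = (- \<bar>s k\<bar>) ^ m k" by (rule arg_cong[where f="\<lambda>z. z ^ m k"])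
      also have "\<dots> = (-1) ^ m k * \<bar>s k\<bar> ^ m k" by (rule power_minus)
      finally show ?thesis using True by (simp only: if_True)
    next
      case False
      have "s k > 0" using sin_sign(1)[OF y j k] False unfolding s_def by simp
      hence "s k = \<bar>s k\<bar>" by simp
      hence "s k ^ m k = \<bar>s k\<bar> ^ m k" by (rule arg_cong[where f="\<lambda>z. z ^ m k"])
      thus ?thesis using False by (simp only: if_False mult_1)
    qed
  qed simp
  also have "\<dots> = (\<Prod>k=1..n. (if j < k then (-1) ^ m k else 1)) * (\<Prod>k=1..n. \<bar>s k\<bar> ^ m k)"
    by (rule prod.distrib)
  also have "(\<Prod>k=1..n. (if j < k then (-1) ^ m k else 1)) = (\<Prod>k\<in>{k\<in>{1..n}. j < k}. (-1::real) ^ m k)"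
    by (subst prod.inter_filter) auto
  also have "{k\<in>{1..n}. j < k} = {j+1..n}" by auto
  also have "(\<Prod>k\<in>{j+1..n}. (-1::real) ^ m k) = (-1) ^ (\<Sum>k = j+1..n. m k)"
    by (simp add: power_sum)
  finally have "(\<Prod>k=1..n. s k ^ m k) = (-1) ^ (\<Sum>k = j+1..n. m k) * (\<Prod>k=1..n. \<bar>s k\<bar> ^ m k)" .
  thus ?thesis unfolding T_fun_def s_def[symmetric] m_def[symmetric] alj by simp
qed

end

theorem theorem9p7:
  fixes n :: nat and x nu a alpha :: "nat \<Rightarrow> real"
  assumes x0: "0 \<le> x 0" and xn: "x n \<le> 1"
    and xinc: "\<forall>j<n. x j < x (j+1)"
    and nupos: "\<forall>k\<in>{1..n}. nu k > 0"
    and arng: "\<forall>k\<in>{1..n}. 0 < a k \<and> a k \<le> 1"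
    and alphapos: "\<forall>j\<le>n. alpha j > 0"
    and case_ac: "x n - x 0 < 1 \<or> (\<forall>k\<in>{1..n}. a k < 1)"
  shows "(\<exists>C y. is_solution n x a nu alpha C y \<and>
            (\<forall>C' y'. is_solution n x a nu alpha C' y' \<longrightarrow> C' = C \<and> (\<forall>k\<in>{1..n}. y' k = y k)))
       \<and> ((\<forall>k\<in>{1..n}. nu k \<in> \<nat>) \<longrightarrow>
            (\<forall>C y. is_solution n x a nu alpha C y \<longrightarrow>
              (\<forall>j\<le>n. T_fun n C a nu y (x j) = (-1) ^ (\<Sum>k = j+1..n. nat \<lfloor>nu k\<rfloor>) * alpha j)))"
proof -
  have aD: "\<forall>k\<in>{1..n}. a k * (x n - x 0) < 1"
  proof
    fix k assume k: "k \<in> {1..n}"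
    have ak: "0 < a k" "a k \<le> 1" using arng k by auto
    show "a k * (x n - x 0) < 1"
    proof (cases "x n - x 0 < 0")
      case True
      have "a k * (x n - x 0) < 0" using ak True by (intro mult_pos_neg) auto
      thus ?thesis by simp
    next
      case False
      show ?thesis
      proof (cases "x n - x 0 < 1")
        case True
        have "a k * (x n - x 0) \<le> 1 * (x n - x 0)" using ak False by (intro mult_right_mono) auto
        thus ?thesis using True by simp
      next
        case F2: False
        hence "a k < 1" using case_ac k by auto
        have "a k * (x n - x 0) \<le> a k * 1" using ak x0 xn by (intro mult_left_mono) auto
        thus ?thesis using \<open>a k < 1\<close> by simp
      qed
    qed
  qed
  interpret setup9 n x nu a
    using xinc nupos arng aD by unfold_locales auto
  show ?thesis using partA[OF alphapos] partB by blast
qed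

end
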